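(* Let $A$ be a JBW algebra with unit $\mathbf{1}$ and let $C\in ASU(A)$. Then $C$ is an atom of the poset $ASU(A)$ if and only if there is a projection $p\in A$ with $p\neq 0$ and $p\neq\mathbf{1}$ such that $C=\operatorname{span}\{p,\mathbf{1}-p\}$.
   Context: A JB algebra is a real Banach algebra $(A,\circ)$ with a commutative product satisfying $a\circ(b\circ a^2)=(a\circ b)\circ a^2$, $\|a^2\|\le\|a^2+b^2\|$, $\|a\|^2=\|a^2\|$; a JBW algebra is a JB algebra that is a dual Banach space (it has a unit $\mathbf{1}$). A projection is an element $p$ with $p\circ p=p$. $ASU(A)$ is the set of all norm-closed associative subalgebras of $A$ containing $\mathbf{1}$, ordered by inclusion; its smallest element is $\mathbb{R}\mathbf{1}$. An atom of a poset with least element $\mathbf{0}$ is an element $x\neq\mathbf{0}$ such that no element lies strictly between $\mathbf{0}$ and $x$. *)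

theory Defs
  imports "HOL-Analysis.Analysis"
begin

definition jb_algebra :: "('a::banach \<Rightarrow> 'a \<Rightarrow> 'a) \<Rightarrow> bool" where
  "jb_algebra jp \<longleftrightarrow>
     bilinear jp \<and>
     (\<forall>a b. norm (jp a b) \<le> norm a * norm b) \<and>
     (\<forall>a b. jp a b = jp b a) \<and>
     (\<forall>a b. jp a (jp b (jp a a)) = jp (jp a b) (jp a a)) \<and>
     (\<forall>a b. norm (jp a a) \<le> norm (jp a a + jp b b)) \<and>
     (\<forall>a. (norm a)\<^sup>2 = norm (jp a a))"

definition is_unit :: "('a \<Rightarrow> 'a \<Rightarrow> 'a) \<Rightarrow> 'a \<Rightarrow> bool" where
  "is_unit jp u \<longleftrightarrow> (\<forall>a. jp u a = a)"

text \<open>T identifies the Banach space with the dual of the Banach space 'b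
  (a surjective linear isometry onto the dual), i.e. 'a is a dual Banach space
  with predual 'b.\<close>
definition dual_space_iso :: "('a::real_normed_vector \<Rightarrow> ('b::banach \<Rightarrow>\<^sub>L real)) \<Rightarrow> bool" where
  "dual_space_iso T \<longleftrightarrow> linear T \<and> bij T \<and> (\<forall>x. norm (T x) = norm x)"

definition is_projection :: "('a \<Rightarrow> 'a \<Rightarrow> 'a) \<Rightarrow> 'a \<Rightarrow> bool" where
  "is_projection jp p \<longleftrightarrow> jp p p = p"

definition ASU :: "('a::real_normed_vector \<Rightarrow> 'a \<Rightarrow> 'a) \<Rightarrow> 'a \<Rightarrow> 'a set set" where
  "ASU jp u = {C. subspace C \<and> closed C \<and> u \<in> C \<and>
                  (\<forall>a\<in>C. \<forall>b\<in>C. jp a b \<in> C) \<and>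
                  (\<forall>a\<in>C. \<forall>b\<in>C. \<forall>c\<in>C. jp (jp a b) c = jp a (jp b c))}"

definition is_atom :: "'a set set \<Rightarrow> 'a set \<Rightarrow> 'a set \<Rightarrow> bool" where
  "is_atom P b x \<longleftrightarrow> x \<in> P \<and> x \<noteq> b \<and> \<not> (\<exists>y\<in>P. b \<subset> y \<and> y \<subset> x)"

end

theory Submission
  imports Defs
begin

locale jbC =
  fixes jp :: "'a::banach \<Rightarrow> 'a \<Rightarrow> 'a" (infixl "\<odot>" 70)
    and u :: 'a and C :: "'a set"
  assumes jb: "jb_algebra jp" and unit: "is_unit jp u" and CA: "C \<in> ASU jp u"
begin

lemma bil: "bilinear jp" using jb by (simp add: jb_algebra_def)
lemma linL: "linear (\<lambda>a. a \<odot> b)" using bil by (simp add: bilinear_def)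
lemma linR: "linear (\<lambda>b. a \<odot> b)" using bil by (simp add: bilinear_def)

lemma jp_addL[simp]: "(a + b) \<odot> c = a \<odot> c + b \<odot> c" using linear_add[OF linL] by blast
lemma jp_addR[simp]: "c \<odot> (a + b) = c \<odot> a + c \<odot> b" using linear_add[OF linR] by blast
lemma jp_diffL[simp]: "(a - b) \<odot> c = a \<odot> c - b \<odot> c" using linear_diff[OF linL] by blast
lemma jp_diffR[simp]: "c \<odot> (a - b) = c \<odot> a - c \<odot> b" using linear_diff[OF linR] by blast
lemma jp_scaleL[simp]: "(r *\<^sub>R a) \<odot> c = r *\<^sub>R (a \<odot> c)" using linear_scale[OF linL] by blast
lemma jp_scaleR[simp]: "c \<odot> (r *\<^sub>R a) = r *\<^sub>R (c \<odot> a)" using linear_scale[OF linR] by blast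
lemma jp_0L[simp]: "0 \<odot> c = 0" using linear_0[OF linL] by blast
lemma jp_0R[simp]: "c \<odot> 0 = 0" using linear_0[OF linR] by blast
lemma jp_negL[simp]: "(- a) \<odot> c = - (a \<odot> c)" using linear_neg[OF linL] by blast
lemma jp_negR[simp]: "c \<odot> (- a) = - (c \<odot> a)" using linear_neg[OF linR] by blast

lemma comm: "a \<odot> b = b \<odot> a" using jb by (simp add: jb_algebra_def)
lemma nmult: "norm (a \<odot> b) \<le> norm a * norm b" using jb by (simp add: jb_algebra_def)
lemma nsq: "norm (a \<odot> a) = (norm a)\<^sup>2" using jb by (simp add: jb_algebra_def)
lemma jbax: "norm (a \<odot> a) \<le> norm (a \<odot> a + b \<odot> b)" using jb by (simp add: jb_algebra_def)
lemma unitL[simp]: "u \<odot> a = a" using unit by (simp add: is_unit_def)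
lemma unitR[simp]: "a \<odot> u = a" using comm unitL by metis

lemma Csub: "subspace C" and Ccl: "closed C" and uC[simp]: "u \<in> C"
  and Cmul: "a \<in> C \<Longrightarrow> b \<in> C \<Longrightarrow> a \<odot> b \<in> C"
  and assoc: "a \<in> C \<Longrightarrow> b \<in> C \<Longrightarrow> c \<in> C \<Longrightarrow> (a \<odot> b) \<odot> c = a \<odot> (b \<odot> c)"
  using CA by (auto simp: ASU_def)

lemma C0[simp]: "0 \<in> C" using Csub subspace_0 by blast
lemma Cadd[simp]: "a \<in> C \<Longrightarrow> b \<in> C \<Longrightarrow> a + b \<in> C" using Csub subspace_add by blast
lemma Cdiff[simp]: "a \<in> C \<Longrightarrow> b \<in> C \<Longrightarrow> a - b \<in> C" using Csub subspace_diff by blast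
lemma Cscale[simp]: "a \<in> C \<Longrightarrow> r *\<^sub>R a \<in> C" using Csub subspace_scale by blast
lemma Cneg[simp]: "a \<in> C \<Longrightarrow> - a \<in> C" using Csub subspace_neg by blast

lemma norm_u: "norm u \<le> 1"
proof -
  have "(norm u)\<^sup>2 = norm u" using nsq[of u] by simp
  then have "norm u = 0 \<or> norm u = 1" by (simp add: power2_eq_square)
  then show ?thesis by auto
qed

lemma norm_u1: "u \<noteq> 0 \<Longrightarrow> norm u = 1"
proof -
  assume "u \<noteq> 0"
  have "(norm u)\<^sup>2 = norm u" using nsq[of u] by simp
  with \<open>u \<noteq> 0\<close> show ?thesis by (simp add: power2_eq_square)
qed

lemma swap4: "a \<in> C \<Longrightarrow> b \<in> C \<Longrightarrow> c \<in> C \<Longrightarrow> d \<in> C \<Longrightarrow>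
   (a \<odot> b) \<odot> (c \<odot> d) = (a \<odot> c) \<odot> (b \<odot> d)"
proof -
  assume C: "a \<in> C" "b \<in> C" "c \<in> C" "d \<in> C"
  have "(a \<odot> b) \<odot> (c \<odot> d) = a \<odot> (b \<odot> (c \<odot> d))" using C by (simp add: assoc Cmul)
  also have "b \<odot> (c \<odot> d) = (b \<odot> c) \<odot> d" using C by (simp add: assoc)
  also have "b \<odot> c = c \<odot> b" by (rule comm)
  also have "(c \<odot> b) \<odot> d = c \<odot> (b \<odot> d)" using C by (simp add: assoc)
  also have "a \<odot> (c \<odot> (b \<odot> d)) = (a \<odot> c) \<odot> (b \<odot> d)" using C by (simp add: assoc Cmul)
  finally show ?thesis .
qed

lemma sq_diff: "a \<odot> a - b \<odot> b = (a - b) \<odot> (a + b)"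
  by (simp add: comm[of b a] algebra_simps)

lemma sqrt_ex:
  assumes y: "y \<in> C" "norm y < 1"
  shows "\<exists>v\<in>C. v \<odot> v = u - y"
proof -
  define q where "q = norm y"
  define \<rho> where "\<rho> = (1 + q) / 2"
  have q: "0 \<le> q" "q < 1" using y by (auto simp: q_def)
  have rho: "0 \<le> \<rho>" "\<rho> < 1" "q + \<rho>^2 \<le> 2 * \<rho>"
  proof -
    have "(1 - q) * (1 - q) \<le> 4 * (1 - q)" using q by (intro mult_right_mono) auto
    then show "0 \<le> \<rho>" "\<rho> < 1" "q + \<rho>^2 \<le> 2 * \<rho>" using q unfolding \<rho>_def
      by (auto simp: power2_eq_square field_simps)
  qed
  define S where "S = C \<inter> cball 0 \<rho>"
  define f where "f r = (1/2) *\<^sub>R (y + r \<odot> r)" for r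
  have "\<exists>!x\<in>S. f x = x"
  proof (rule Banach_fix)
    show "complete S" unfolding S_def using Ccl by (simp add: complete_eq_closed closed_Int)
    have "0 \<in> S" using rho unfolding S_def by auto
    then show "S \<noteq> {}" by blast
    show "0 \<le> \<rho>" "\<rho> < 1" using rho by auto
    show "f ` S \<subseteq> S"
    proof
      fix z assume "z \<in> f ` S"
      then obtain r where r: "r \<in> C" "norm r \<le> \<rho>" and z: "z = f r" unfolding S_def by auto
      have "norm (y + r \<odot> r) \<le> q + \<rho>^2"
        using norm_triangle_ineq[of y "r \<odot> r"] nsq[of r] r q_def
        by (smt (verit) norm_ge_zero power_mono)
      then have "norm z \<le> \<rho>" using rho unfolding z f_def by simp
      moreover have "z \<in> C" using r y unfolding z f_def by (simp add: Cmul)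
      ultimately show "z \<in> S" unfolding S_def by simp
    qed
    fix a b assume ab: "a \<in> S" "b \<in> S"
    have "f a - f b = (1/2) *\<^sub>R ((a - b) \<odot> (a + b))"
      unfolding f_def sq_diff[symmetric] by (simp add: algebra_simps)
    then have 1: "norm (f a - f b) \<le> (1/2) * (norm (a - b) * norm (a + b))"
      using nmult[of "a - b" "a + b"] by simp
    have h: "norm (a + b) \<le> 2 * \<rho>" using ab unfolding S_def
      by (smt (verit) mem_cball_0 norm_triangle_ineq IntD2)
    have "norm (a - b) * norm (a + b) \<le> norm (a - b) * (2 * \<rho>)"
      using h by (intro mult_left_mono) auto
    also have "\<dots> = 2 * (\<rho> * norm (a - b))" by (simp only: mult.commute mult.left_commute)
    finally have "norm (a - b) * norm (a + b) \<le> 2 * (\<rho> * norm (a - b))" .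
    then have "norm (f a - f b) \<le> \<rho> * norm (a - b)" using 1 by linarith
    then show "dist (f a) (f b) \<le> \<rho> * dist a b" by (simp add: dist_norm)
  qed
  then obtain r where r: "r \<in> S" "f r = r" by auto
  then have rC: "r \<in> C" unfolding S_def by auto
  have "y + r \<odot> r = 2 *\<^sub>R ((1/2) *\<^sub>R (y + r \<odot> r))" by simp
  also have "\<dots> = 2 *\<^sub>R r" using r(2) unfolding f_def by simp
  finally have e: "r \<odot> r = 2 *\<^sub>R r - y" by (simp add: algebra_simps)
  have "(u - r) \<odot> (u - r) = u - r - r + r \<odot> r" by (simp only: jp_diffL jp_diffR unitL unitR) (simp add: algebra_simps)
  also have "\<dots> = u - y" unfolding e by (simp add: scaleR_2)
  finally have "(u - r) \<odot> (u - r) = u - y" .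
  then show ?thesis using rC by (intro bexI[of _ "u - r"]) auto
qed


lemma tsq:
  assumes a: "a \<in> C" and t: "norm (a \<odot> a) < t"
  shows "norm (t *\<^sub>R u - a \<odot> a) \<le> t"
proof -
  have t0: "t > 0" using t norm_ge_zero[of "a \<odot> a"] by linarith
  define y where "y = (1/t) *\<^sub>R (a \<odot> a)"
  have "norm y < 1" using t t0 unfolding y_def by (simp add: field_simps)
  then obtain v where v: "v \<in> C" "v \<odot> v = u - y" using sqrt_ex[of y] a unfolding y_def by (auto simp: Cmul)
  define b where "b = (1 / sqrt t) *\<^sub>R a"
  have "b \<odot> b = y" unfolding b_def y_def using t0
    by (simp add: power_divide)
  then have "norm (u - y) \<le> norm u" using jbax[of v b] v by simp
  then have "norm (u - y) \<le> 1" using norm_u by linarith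
  moreover have "t *\<^sub>R u - a \<odot> a = t *\<^sub>R (u - y)" using t0 unfolding y_def by (simp add: algebra_simps)
  ultimately show ?thesis using t0 by simp
qed

inductive_set sos :: "'a set" where
  sos0: "0 \<in> sos"
| sosI: "a \<in> C \<Longrightarrow> s \<in> sos \<Longrightarrow> a \<odot> a + s \<in> sos"

lemma sosC: "s \<in> sos \<Longrightarrow> s \<in> C"
  by (induction rule: sos.induct) (auto simp: Cmul)

lemma sos_bound: "s \<in> sos \<Longrightarrow> \<exists>T\<ge>0. norm (T *\<^sub>R u - s) \<le> T"
proof (induction rule: sos.induct)
  case sos0 then show ?case by (intro exI[of _ 0]) auto
next
  case (sosI a s)
  then obtain T where T: "T \<ge> 0" "norm (T *\<^sub>R u - s) \<le> T" by auto
  define t where "t = norm (a \<odot> a) + 1"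
  have t: "norm (t *\<^sub>R u - a \<odot> a) \<le> t" "t \<ge> 0" using tsq[of a t] sosI unfolding t_def by auto
  have "(t + T) *\<^sub>R u - (a \<odot> a + s) = (t *\<^sub>R u - a \<odot> a) + (T *\<^sub>R u - s)" by (simp add: algebra_simps)
  then have "norm ((t + T) *\<^sub>R u - (a \<odot> a + s)) \<le> t + T"
    using norm_triangle_ineq[of "t *\<^sub>R u - a \<odot> a" "T *\<^sub>R u - s"] t T by (simp only:)
  then show ?case using t T by (intro exI[of _ "t + T"]) auto
qed

lemma mon:
  assumes a: "a \<in> C" and s: "s \<in> sos"
  shows "norm (a \<odot> a) \<le> norm (a \<odot> a + s)"
proof (rule field_le_epsilon)
  fix e :: real assume e: "e > 0"
  obtain T where T: "T \<ge> 0" "norm (T *\<^sub>R u - s) \<le> T" using sos_bound[OF s] by auto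
  define y where "y = (1 / (T + e)) *\<^sub>R (T *\<^sub>R u - s)"
  have "norm y \<le> T / (T + e)" using T e unfolding y_def by (simp add: divide_right_mono)
  also have "\<dots> < 1" using T e by simp
  finally have y1: "norm y < 1" .
  have yC: "y \<in> C" unfolding y_def using sosC[OF s] by simp
  obtain v where v: "v \<in> C" "v \<odot> v = u - y" using sqrt_ex[OF yC y1] by auto
  define w where "w = sqrt (T + e) *\<^sub>R v"
  have "w \<odot> w = (T + e) *\<^sub>R (u - y)" unfolding w_def using v T e
    by (simp add: real_sqrt_mult[symmetric] power2_eq_square[symmetric])
  also have "\<dots> = e *\<^sub>R u + s"
  proof -
    have "(T + e) *\<^sub>R y = T *\<^sub>R u - s" using T e unfolding y_def by simp
    then show ?thesis by (simp add: algebra_simps)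
  qed
  finally have w: "w \<odot> w = e *\<^sub>R u + s" .
  have "norm (a \<odot> a) \<le> norm (a \<odot> a + w \<odot> w)" by (rule jbax)
  also have "a \<odot> a + w \<odot> w = (a \<odot> a + s) + e *\<^sub>R u" using w by (simp add: algebra_simps)
  also have "norm \<dots> \<le> norm (a \<odot> a + s) + e * norm u" using norm_triangle_ineq[of "a \<odot> a + s" "e *\<^sub>R u"] e by simp
  also have "\<dots> \<le> norm (a \<odot> a + s) + e" using norm_u e by (simp add: mult_left_le)
  finally show "norm (a \<odot> a) \<le> norm (a \<odot> a + s) + e" .
qed


definition pw :: "'a \<Rightarrow> nat \<Rightarrow> 'a" where "pw x n = ((\<lambda>z. x \<odot> z) ^^ n) u"

lemma pw_0[simp]: "pw x 0 = u" and pw_Suc: "pw x (Suc n) = x \<odot> pw x n"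
  by (simp_all add: pw_def)

lemma pwC[simp]: "x \<in> C \<Longrightarrow> pw x n \<in> C"
  by (induction n) (auto simp: pw_Suc Cmul)

lemma pw_add: "x \<in> C \<Longrightarrow> pw x (m + n) = pw x m \<odot> pw x n"
  by (induction m) (auto simp: pw_Suc assoc)

lemma pw_Suc': "x \<in> C \<Longrightarrow> pw x (Suc n) = pw x n \<odot> x"
  using pw_add[of x n 1] by (simp add: pw_Suc)

lemma pw_scale: "pw (r *\<^sub>R x) n = r ^ n *\<^sub>R pw x n"
  by (induction n) (auto simp: pw_Suc)

lemma pw_sq: "x \<in> C \<Longrightarrow> pw (x \<odot> x) n = pw x n \<odot> pw x n"
proof (induction n)
  case 0 then show ?case by simp
next
  case (Suc n)
  have "pw (x \<odot> x) (Suc n) = (x \<odot> x) \<odot> (pw x n \<odot> pw x n)" using Suc by (simp add: pw_Suc)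
  also have "\<dots> = (x \<odot> pw x n) \<odot> (x \<odot> pw x n)" by (rule swap4) (use Suc.prems in auto)
  finally show ?case by (simp add: pw_Suc)
qed

lemma pw_norm: "norm (pw x n) \<le> norm x ^ n"
proof (induction n)
  case 0 then show ?case using norm_u by simp
next
  case (Suc n)
  have "norm (pw x (Suc n)) \<le> norm x * norm (pw x n)" using nmult by (simp add: pw_Suc)
  also have "\<dots> \<le> norm x * norm x ^ n" using Suc by (simp add: mult_left_mono)
  finally show ?case by simp
qed

lemma pw_norm1:
  assumes "u \<noteq> 0" "x \<in> C" "norm x = 1"
  shows "norm (pw x n) = 1"
proof -
  have p2: "norm (pw x (2 ^ k)) = 1" for k
  proof (induction k)
    case 0 then show ?case using assms by (simp add: pw_Suc)
  next
    case (Suc k)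
    have "pw x (2 ^ Suc k) = pw x (2^k) \<odot> pw x (2^k)" using pw_add[of x "2^k" "2^k"] assms by (simp add: mult_2)
    then show ?case using nsq[of "pw x (2^k)"] Suc by simp
  qed
  have le: "norm (pw x m) \<le> 1" for m using pw_norm[of x m] assms by simp
  obtain k where k: "n \<le> 2 ^ k" using less_exp[of n] by (meson less_imp_le)
  have "pw x (2 ^ k) = pw x n \<odot> pw x (2 ^ k - n)" using pw_add[of x n "2^k - n"] k assms by simp
  then have "1 \<le> norm (pw x n) * norm (pw x (2 ^ k - n))" using p2[of k] nmult by metis
  also have "\<dots> \<le> norm (pw x n)" using le[of "2^k - n"] by (simp add: mult_left_le)
  finally show ?thesis using le[of n] by simp
qed


lemma crux_s:
  assumes x: "x \<in> C" "norm x \<le> 1" and s: "0 < s" "s < 1"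
  defines "d \<equiv> (s *\<^sub>R x) \<odot> (s *\<^sub>R x)"
  shows "norm (pw d n - pw d (Suc n)) \<le> 2 / (real n + 1)"
proof -
  define y where "y = s *\<^sub>R x"
  have yC: "y \<in> C" and dC: "d \<in> C" using x unfolding y_def d_def by (auto simp: Cmul)
  have ny: "norm y \<le> s" using x s unfolding y_def by (simp add: mult_left_le)
  have "norm d = (norm y)^2" unfolding d_def y_def by (rule nsq)
  also have "\<dots> \<le> s^2" by (rule power_mono[OF ny norm_ge_zero])
  finally have nd: "norm d \<le> s^2" .
  have "s^2 < 1" using s by (simp add: power_less_one_iff)
  then have nd1: "norm d < 1" using nd by linarith
  obtain v where v: "v \<in> C" "v \<odot> v = u - d" using sqrt_ex[OF dC nd1] by auto
  have dy: "d = y \<odot> y" unfolding d_def y_def ..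
  define P where "P k = u - pw d (Suc k) - real (Suc k) *\<^sub>R (pw d k - pw d (Suc k))" for k
  have Psos: "P k \<in> sos" for k
  proof (induction k)
    case 0 then show ?case unfolding P_def by (simp add: pw_Suc sos0)
  next
    case (Suc k)
    define w where "w = pw y k \<odot> (u - d)"
    have wC: "w \<in> C" unfolding w_def using yC dC by (simp add: Cmul)
    have "w \<odot> w = (pw y k \<odot> pw y k) \<odot> ((u - d) \<odot> (u - d))"
      unfolding w_def by (rule swap4) (use yC dC in auto)
    also have "pw y k \<odot> pw y k = pw d k" using pw_sq[OF yC] dy by simp
    also have "(u - d) \<odot> (u - d) = u - 2 *\<^sub>R d + d \<odot> d"
      by (simp only: jp_diffL jp_diffR unitL unitR) (simp add: scaleR_2 algebra_simps)
    also have "pw d k \<odot> (u - 2 *\<^sub>R d + d \<odot> d) = pw d k - 2 *\<^sub>R (pw d k \<odot> d) + (pw d k \<odot> d) \<odot> d"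
      using dC by (simp only: jp_addR jp_diffR jp_scaleR unitR assoc pwC)
    also have "pw d k \<odot> d = pw d (Suc k)" using pw_Suc'[OF dC] by simp
    also have "pw d (Suc k) \<odot> d = pw d (Suc (Suc k))" using pw_Suc'[OF dC] by simp
    finally have ww: "w \<odot> w = pw d k - 2 *\<^sub>R pw d (Suc k) + pw d (Suc (Suc k))" .
    define a where "a = sqrt (real (Suc k)) *\<^sub>R w"
    have aa: "a \<odot> a = real (Suc k) *\<^sub>R (w \<odot> w)" unfolding a_def
      by (simp del: of_nat_Suc)
    have "P (Suc k) = a \<odot> a + P k" unfolding aa ww P_def
      by (simp add: algebra_simps del: of_nat_Suc) (simp add: algebra_simps scaleR_2, metis mult.commute mult_2 scaleR_add_left)
    then show ?case using Suc wC sosI[of a "P k"] unfolding a_def by simp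
  qed
  define f where "f = pw d n - pw d (Suc n)"
  define a where "a = sqrt (real (Suc n)) *\<^sub>R (pw y n \<odot> v)"
  have aC: "a \<in> C" unfolding a_def using yC v by (simp add: Cmul)
  have "(pw y n \<odot> v) \<odot> (pw y n \<odot> v) = (pw y n \<odot> pw y n) \<odot> (v \<odot> v)"
    by (rule swap4) (use yC v in auto)
  also have "\<dots> = pw d n \<odot> (u - d)" using pw_sq[OF yC] dy v by simp
  also have "\<dots> = f" unfolding f_def using pw_Suc'[OF dC] by simp
  finally have aa: "a \<odot> a = real (Suc n) *\<^sub>R f" unfolding a_def by (simp del: of_nat_Suc)
  have "norm (a \<odot> a) \<le> norm (a \<odot> a + P n)" using mon[OF aC Psos] .
  also have "a \<odot> a + P n = u - pw d (Suc n)" unfolding aa P_def f_def by simp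
  also have "norm \<dots> \<le> norm u + norm (pw d (Suc n))" by (rule norm_triangle_ineq4)
  also have "\<dots> \<le> 2"
  proof -
    have "norm d ^ Suc n \<le> 1" by (rule power_le_one) (use nd1 in auto)
    then show ?thesis using norm_u pw_norm[of d "Suc n"] by linarith
  qed
  finally have "real (Suc n) * norm f \<le> 2" unfolding aa by simp
  then show ?thesis unfolding f_def by (simp add: field_simps)
qed

lemma crux:
  assumes x: "x \<in> C" "norm x \<le> 1"
  shows "norm (pw (x \<odot> x) n - pw (x \<odot> x) (Suc n)) \<le> 2 / (real n + 1)"
proof -
  define c where "c = x \<odot> x"
  define A where "A = pw c n"
  define B where "B = pw c (Suc n)"
  have nc: "norm c \<le> 1" unfolding c_def using nsq[of x] x by (simp add: power_le_one)
  have "norm c ^ n \<le> 1" "norm c ^ Suc n \<le> 1" using power_le_one[OF norm_ge_zero nc] by blast+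
  then have nA: "norm A \<le> 1" and nB: "norm B \<le> 1" unfolding A_def B_def
    using pw_norm[of c n] pw_norm[of c "Suc n"] by linarith+
  have key: "norm (A - B) \<le> 2 / (real n + 1) + 2 * (1 - s ^ (2 * n + 2))" if s: "0 < s" "s < 1" for s
  proof -
    have dd: "(s *\<^sub>R x) \<odot> (s *\<^sub>R x) = (s^2) *\<^sub>R c" unfolding c_def by (simp add: power2_eq_square)
    have e0: "(s^2)^n = s^(2*n)" "(s^2)^(Suc n) = s^(2*(Suc n))"
      by (simp_all only: power_mult)
    have e: "(s^2)^n = s^(2*n)" "(s^2)^(Suc n) = s^(2*n+2)"
      using e0 by simp_all
    have 1: "norm (s ^ (2*n) *\<^sub>R A - s ^ (2*n+2) *\<^sub>R B) \<le> 2 / (real n + 1)"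
      using crux_s[OF x s, of n] unfolding dd pw_scale A_def B_def e .
    have p1: "s ^ (2*n) \<le> 1" "s ^ (2*n+2) \<le> 1" "s^(2*n+2) \<le> s^(2*n)" "0 \<le> s^(2*n+2)"
    proof -
      show "s ^ (2*n) \<le> 1" using s by (intro power_le_one) auto
      show "s ^ (2*n+2) \<le> 1" using s by (intro power_le_one) auto
      show "s^(2*n+2) \<le> s^(2*n)" using s by (intro power_decreasing) auto
      show "0 \<le> s^(2*n+2)" using s by simp
    qed
    have "A - B = (s ^ (2*n) *\<^sub>R A - s ^ (2*n+2) *\<^sub>R B) + (1 - s^(2*n)) *\<^sub>R A - (1 - s^(2*n+2)) *\<^sub>R B"
      by (simp add: algebra_simps)
    then have "norm (A - B) \<le> norm (s ^ (2*n) *\<^sub>R A - s ^ (2*n+2) *\<^sub>R B) + (1 - s^(2*n)) * norm A + (1 - s^(2*n+2)) * norm B"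
      using p1 by (smt (verit) norm_triangle_ineq norm_triangle_ineq4 norm_scaleR abs_of_nonneg)
    also have "\<dots> \<le> 2 / (real n + 1) + (1 - s^(2*n+2)) * 1 + (1 - s^(2*n+2)) * 1"
      using 1 p1 nA nB by (intro add_mono mult_mono) auto
    finally show ?thesis by simp
  qed
  have lim: "((\<lambda>s. 2 / (real n + 1) + 2 * (1 - s ^ (2 * n + 2))) \<longlongrightarrow> 2 / (real n + 1) + 2 * (1 - 1 ^ (2 * n + 2))) (at_left 1)"
    by (intro tendsto_intros)
  have "norm (A - B) \<le> 2 / (real n + 1) + 2 * (1 - 1 ^ (2 * n + 2))"
    using lim
  proof (rule tendsto_lowerbound)
    show "\<forall>\<^sub>F s in at_left 1. norm (A - B) \<le> 2 / (real n + 1) + 2 * (1 - s ^ (2 * n + 2))"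
      using eventually_at_left_real[OF zero_less_one]
    proof (rule eventually_mono)
      fix s :: real assume "s \<in> {0<..<1}"
      then show "norm (A - B) \<le> 2 / (real n + 1) + 2 * (1 - s ^ (2 * n + 2))" by (intro key) auto
    qed
  qed simp
  then show ?thesis unfolding A_def B_def c_def by simp
qed

end



lemma closed_add_line:
  fixes N :: "'a::banach set"
  assumes cl: "closed N" and sub: "subspace N" and v: "v \<notin> N"
  shows "closed {t *\<^sub>R v + n | t n. n \<in> N}"
proof -
  have N0: "0 \<in> N" using sub subspace_0 by blast
  define d where "d = infdist v N"
  have d: "d > 0" unfolding d_def using infdist_pos_not_in_closed[OF cl _ v] N0 by auto
  have bnd: "\<bar>t\<bar> * d \<le> norm (t *\<^sub>R v + n)" if n: "n \<in> N" for t n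
  proof (cases "t = 0")
    case True then show ?thesis by simp
  next
    case False
    have "- ((1/t) *\<^sub>R n) \<in> N" using n sub by (simp add: subspace_neg subspace_scale)
    then have "d \<le> dist v (- ((1/t) *\<^sub>R n))" unfolding d_def by (rule infdist_le)
    also have "\<dots> = norm (v + (1/t) *\<^sub>R n)" by (simp add: dist_norm)
    finally have "\<bar>t\<bar> * d \<le> \<bar>t\<bar> * norm (v + (1/t) *\<^sub>R n)" by (simp add: mult_left_mono)
    also have "\<dots> = norm (t *\<^sub>R (v + (1/t) *\<^sub>R n))" by simp
    also have "t *\<^sub>R (v + (1/t) *\<^sub>R n) = t *\<^sub>R v + n" using False by (simp add: algebra_simps)
    finally show ?thesis .
  qed
  show ?thesis unfolding closed_sequential_limits
  proof (intro allI impI, elim conjE)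
    fix x l assume xs: "\<forall>k. x k \<in> {t *\<^sub>R v + n | t n. n \<in> N}" and lim: "x \<longlonglongrightarrow> l"
    obtain t n where tn: "\<And>k. x k = t k *\<^sub>R v + n k" "\<And>k. n k \<in> N"
      using xs by simp metis
    have "Cauchy x" using lim by (rule LIMSEQ_imp_Cauchy)
    have "Cauchy t"
    proof (rule metric_CauchyI)
      fix e :: real assume e: "e > 0"
      obtain M where M: "\<And>m k. m \<ge> M \<Longrightarrow> k \<ge> M \<Longrightarrow> dist (x m) (x k) < e * d"
        using \<open>Cauchy x\<close> e d unfolding Cauchy_def by (meson mult_pos_pos)
      show "\<exists>M. \<forall>m\<ge>M. \<forall>k\<ge>M. dist (t m) (t k) < e"
      proof (intro exI allI impI)
        fix m k assume mk: "m \<ge> M" "k \<ge> M"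
        have "x m - x k = (t m - t k) *\<^sub>R v + (n m - n k)" using tn by (simp add: algebra_simps)
        moreover have "n m - n k \<in> N" using tn sub by (simp add: subspace_diff)
        ultimately have "\<bar>t m - t k\<bar> * d \<le> norm (x m - x k)" using bnd by metis
        also have "\<dots> < e * d" using M[OF mk] by (simp add: dist_norm)
        finally show "dist (t m) (t k) < e" using d by (simp add: dist_real_def)
      qed
    qed
    then obtain T where T: "t \<longlonglongrightarrow> T" using Cauchy_convergent_iff convergent_def by blast
    have "(\<lambda>k. x k - t k *\<^sub>R v) \<longlonglongrightarrow> l - T *\<^sub>R v"
      by (intro tendsto_intros lim T)
    moreover have "\<And>k. x k - t k *\<^sub>R v \<in> N" using tn by simp
    ultimately have "l - T *\<^sub>R v \<in> N" using cl unfolding closed_sequential_limits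
      by (metis (no_types, lifting))
    then show "l \<in> {t *\<^sub>R v + n | t n. n \<in> N}" by (intro CollectI exI[of _ T] exI[of _ "l - T *\<^sub>R v"]) simp
  qed
qed


context jbC
begin

abbreviation "Ru \<equiv> range (\<lambda>r. r *\<^sub>R u)"

lemma line_ASU:
  assumes NC: "N \<subseteq> C" and sub: "subspace N" and cl: "closed N"
    and ideal: "\<And>z w. z \<in> N \<Longrightarrow> w \<in> C \<Longrightarrow> z \<odot> w \<in> N" and uN: "u \<notin> N"
  shows "{t *\<^sub>R u + n | t n. n \<in> N} \<in> ASU jp u"
proof -
  define D where "D = {t *\<^sub>R u + n | t n. n \<in> N}"
  have DC: "D \<subseteq> C" unfolding D_def using NC by auto
  have "subspace D" unfolding subspace_def D_def
  proof (intro conjI ballI allI)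
    show "0 \<in> {t *\<^sub>R u + n |t n. n \<in> N}" using sub subspace_0 by force
  next
    fix x y assume "x \<in> {t *\<^sub>R u + n |t n. n \<in> N}" "y \<in> {t *\<^sub>R u + n |t n. n \<in> N}"
    then obtain t1 n1 t2 n2 where "x = t1 *\<^sub>R u + n1" "y = t2 *\<^sub>R u + n2" "n1 \<in> N" "n2 \<in> N" by auto
    then show "x + y \<in> {t *\<^sub>R u + n |t n. n \<in> N}"
      using sub by (intro CollectI exI[of _ "t1 + t2"] exI[of _ "n1 + n2"]) (simp add: subspace_add algebra_simps)
  next
    fix c x assume "x \<in> {t *\<^sub>R u + n |t n. n \<in> N}"
    then obtain t1 n1 where "x = t1 *\<^sub>R u + n1" "n1 \<in> N" by auto
    then show "c *\<^sub>R x \<in> {t *\<^sub>R u + n |t n. n \<in> N}"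
      using sub by (intro CollectI exI[of _ "c * t1"] exI[of _ "c *\<^sub>R n1"]) (simp add: subspace_scale algebra_simps)
  qed
  moreover have "closed D" unfolding D_def using closed_add_line[OF cl sub uN] .
  moreover have "u \<in> D" unfolding D_def using sub subspace_0
    by (intro CollectI exI[of _ 1] exI[of _ 0]) auto
  moreover have "\<forall>a\<in>D. \<forall>b\<in>D. a \<odot> b \<in> D"
  proof (intro ballI)
    fix a b assume "a \<in> D" "b \<in> D"
    then obtain t1 n1 t2 n2 where ab: "a = t1 *\<^sub>R u + n1" "b = t2 *\<^sub>R u + n2" "n1 \<in> N" "n2 \<in> N"
      unfolding D_def by auto
    have "a \<odot> b = (t1 * t2) *\<^sub>R u + (t1 *\<^sub>R n2 + t2 *\<^sub>R n1 + n1 \<odot> n2)"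
      unfolding ab by (simp add: algebra_simps)
    moreover have "t1 *\<^sub>R n2 + t2 *\<^sub>R n1 + n1 \<odot> n2 \<in> N"
      using ab sub ideal[of n1 n2] NC by (auto intro!: subspace_add subspace_scale)
    ultimately show "a \<odot> b \<in> D" unfolding D_def by blast
  qed
  moreover have "\<forall>a\<in>D. \<forall>b\<in>D. \<forall>c\<in>D. (a \<odot> b) \<odot> c = a \<odot> (b \<odot> c)"
    using DC assoc by (meson subsetD)
  ultimately show ?thesis unfolding ASU_def D_def by simp
qed

lemma atom_eq:
  assumes atom: "is_atom (ASU jp u) Ru C" and D: "D \<in> ASU jp u" "Ru \<subseteq> D" "D \<subseteq> C" "D \<noteq> Ru"
  shows "D = C"
  using assms unfolding is_atom_def by blast

lemma quad_case:
  assumes atom: "is_atom (ASU jp u) Ru C" and uz: "u \<noteq> 0"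
    and aC: "a \<in> C" and aR: "a \<notin> Ru" and aa: "a \<odot> a = \<alpha> *\<^sub>R a + \<beta> *\<^sub>R u"
  shows "\<exists>p. is_projection jp p \<and> p \<noteq> 0 \<and> p \<noteq> u \<and> C = span {p, u - p}"
proof -
  define S where "S = {x. \<exists>s t. x = s *\<^sub>R a + t *\<^sub>R u}"
  have Rsub: "subspace Ru" by (metis span_singleton subspace_span)
  have Rcl: "closed Ru"
  proof -
    have "closed {t *\<^sub>R u + n | t n. n \<in> {0::'a}}"
      by (rule closed_add_line) (use uz in \<open>auto simp: subspace_def\<close>)
    moreover have "{t *\<^sub>R u + n | t n. n \<in> {0::'a}} = Ru" by auto
    ultimately show ?thesis by simp
  qed
  have "S = {s *\<^sub>R a + n | s n. n \<in> Ru}" unfolding S_def by auto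
  then have Scl: "closed S" using closed_add_line[OF Rcl Rsub aR] by simp
  have Sform: "x \<in> S \<longleftrightarrow> (\<exists>s t. x = s *\<^sub>R a + t *\<^sub>R u)" for x unfolding S_def by auto
  have SC: "S \<subseteq> C"
  proof
    fix x assume "x \<in> S"
    then obtain s t where "x = s *\<^sub>R a + t *\<^sub>R u" unfolding Sform by auto
    then show "x \<in> C" using aC by simp
  qed
  have "S \<in> ASU jp u" unfolding ASU_def
  proof (intro CollectI conjI ballI)
    show "subspace S" unfolding subspace_def S_def
    proof (intro conjI ballI allI)
      show "0 \<in> {x. \<exists>s t. x = s *\<^sub>R a + t *\<^sub>R u}" by (intro CollectI exI[of _ 0]) simp
    next
      fix x y assume "x \<in> {x. \<exists>s t. x = s *\<^sub>R a + t *\<^sub>R u}" "y \<in> {x. \<exists>s t. x = s *\<^sub>R a + t *\<^sub>R u}"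
      then obtain s1 t1 s2 t2 where "x = s1 *\<^sub>R a + t1 *\<^sub>R u" "y = s2 *\<^sub>R a + t2 *\<^sub>R u" by auto
      then show "x + y \<in> {x. \<exists>s t. x = s *\<^sub>R a + t *\<^sub>R u}"
        by (intro CollectI exI[of _ "s1 + s2"] exI[of _ "t1 + t2"]) (simp add: algebra_simps)
    next
      fix c x assume "x \<in> {x. \<exists>s t. x = s *\<^sub>R a + t *\<^sub>R u}"
      then obtain s1 t1 where "x = s1 *\<^sub>R a + t1 *\<^sub>R u" by auto
      then show "c *\<^sub>R x \<in> {x. \<exists>s t. x = s *\<^sub>R a + t *\<^sub>R u}"
        by (intro CollectI exI[of _ "c * s1"] exI[of _ "c * t1"]) (simp add: algebra_simps)
    qed
    show "closed S" by (rule Scl)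
    show "u \<in> S" unfolding Sform by (intro exI[of _ 0] exI[of _ 1]) simp
  next
    fix x y assume "x \<in> S" "y \<in> S"
    then obtain s1 t1 s2 t2 where xy: "x = s1 *\<^sub>R a + t1 *\<^sub>R u" "y = s2 *\<^sub>R a + t2 *\<^sub>R u" unfolding Sform by auto
    have "x \<odot> y = (s1 * s2) *\<^sub>R (a \<odot> a) + (s1 * t2 + t1 * s2) *\<^sub>R a + (t1 * t2) *\<^sub>R u"
      unfolding xy by (simp add: algebra_simps)
    also have "\<dots> = (s1 * s2 * \<alpha> + s1 * t2 + t1 * s2) *\<^sub>R a + (s1 * s2 * \<beta> + t1 * t2) *\<^sub>R u"
      unfolding aa by (simp add: algebra_simps)
    finally show "x \<odot> y \<in> S" unfolding Sform by blast
  next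
    fix x y z assume "x \<in> S" "y \<in> S" "z \<in> S"
    then show "(x \<odot> y) \<odot> z = x \<odot> (y \<odot> z)" using SC assoc by (meson subsetD)
  qed
  moreover have "Ru \<subseteq> S" unfolding S_def by (auto intro: exI[of _ 0])
  moreover have "S \<noteq> Ru"
  proof
    assume "S = Ru"
    moreover have "a \<in> S" unfolding Sform by (intro exI[of _ 1] exI[of _ 0]) simp
    ultimately show False using aR by simp
  qed
  ultimately have SCeq: "S = C" using atom_eq[OF atom] SC by blast
  define b where "b = a - (\<alpha>/2) *\<^sub>R u"
  define \<gamma> where "\<gamma> = \<beta> + \<alpha>^2/4"
  have bC: "b \<in> C" unfolding b_def using aC by simp
  have bb: "b \<odot> b = \<gamma> *\<^sub>R u"
    unfolding b_def \<gamma>_def using aa by (simp add: comm[of u a] algebra_simps power2_eq_square)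
      (metis field_sum_of_halves scaleR_add_left)
  have bR: "b \<notin> Ru"
  proof
    assume "b \<in> Ru"
    then obtain r where "b = r *\<^sub>R u" by auto
    then have "a = (r + \<alpha>/2) *\<^sub>R u" unfolding b_def by (simp add: algebra_simps)
    then show False using aR by auto
  qed
  have g: "\<gamma> > 0"
  proof (rule ccontr)
    assume "\<not> \<gamma> > 0"
    define e where "e = sqrt (- \<gamma>) *\<^sub>R u"
    have "e \<odot> e = (- \<gamma>) *\<^sub>R u" unfolding e_def using \<open>\<not> \<gamma> > 0\<close>
      by (simp add: real_sqrt_mult[symmetric])
    then have "norm (b \<odot> b) \<le> 0" using jbax[of b e] bb by simp
    then have "(norm b)^2 = 0" using nsq[of b] by simp
    then have "b = 0" by simp
    then show False using bR by (metis rangeI scale_zero_left)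
  qed
  define k where "k = 1 / (2 * sqrt \<gamma>)"
  define p where "p = (1/2) *\<^sub>R u + k *\<^sub>R b"
  have pC: "p \<in> C" unfolding p_def using bC by simp
  have kk: "k * k * \<gamma> = 1/4" unfolding k_def using g by (simp add: field_simps)
  have "p \<odot> p = (1/4) *\<^sub>R u + k *\<^sub>R b + (k * k) *\<^sub>R (b \<odot> b)"
    unfolding p_def by (simp add: algebra_simps scaleR_2) (metis field_sum_of_halves scaleR_add_left)
  also have "(k * k) *\<^sub>R (b \<odot> b) = (1/4) *\<^sub>R u" unfolding bb by (simp only: scaleR_scaleR kk)
  also have "(1/4) *\<^sub>R u + k *\<^sub>R b + (1/4) *\<^sub>R u = ((1/4 + 1/4) *\<^sub>R u) + k *\<^sub>R b"
    by (simp only: scaleR_add_left add.commute add.left_commute)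
  also have "\<dots> = p" unfolding p_def by simp
  finally have proj: "is_projection jp p" unfolding is_projection_def .
  have bp: "b = sqrt \<gamma> *\<^sub>R (2 *\<^sub>R p - u)" unfolding p_def k_def using g by (simp add: algebra_simps)
  have p0: "p \<noteq> 0"
  proof
    assume "p = 0"
    then have "b = (- sqrt \<gamma>) *\<^sub>R u" using bp by simp
    then show False using bR by (metis rangeI)
  qed
  have pu: "p \<noteq> u"
  proof
    assume "p = u"
    then have "b = sqrt \<gamma> *\<^sub>R u" using bp by (simp add: scaleR_2)
    then show False using bR by (metis rangeI)
  qed
  have "C = span {p, u - p}"
  proof
    show "span {p, u - p} \<subseteq> C" using pC Csub by (intro span_minimal) auto
  next
    have sp: "p \<in> span {p, u - p}" "u - p \<in> span {p, u - p}" by (auto intro: span_base)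
    then have su: "u \<in> span {p, u - p}" using span_add[OF sp] by simp
    have sb: "b \<in> span {p, u - p}" unfolding bp using sp su by (intro span_scale span_diff) auto
    have sa: "a \<in> span {p, u - p}"
    proof -
      have "a = b + (\<alpha>/2) *\<^sub>R u" unfolding b_def by simp
      then show ?thesis using sb su by (simp add: span_add span_scale)
    qed
    show "C \<subseteq> span {p, u - p}"
    proof
      fix x assume "x \<in> C"
      then obtain s t where "x = s *\<^sub>R a + t *\<^sub>R u" using SCeq Sform by blast
      then show "x \<in> span {p, u - p}" using sa su by (simp add: span_add span_scale)
    qed
  qed
  then show ?thesis using proj p0 pu by blast
qed


lemma rN: "subspace N \<Longrightarrow> u \<notin> N \<Longrightarrow> r *\<^sub>R u \<in> N \<Longrightarrow> r = 0"
  by (metis divideR_right subspace_scale)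

lemma charN:
  assumes atom: "is_atom (ASU jp u) Ru C" and uz: "u \<noteq> 0"
    and xC: "x \<in> C" and nx: "norm x = 1" and xu: "x \<odot> x \<noteq> u"
  shows "\<exists>N. N \<subseteq> C \<and> subspace N \<and> closed N \<and> (\<forall>z\<in>N. \<forall>w\<in>C. z \<odot> w \<in> N) \<and> u \<notin> N
     \<and> C = {t *\<^sub>R u + n | t n. n \<in> N} \<and> (\<exists>l. l * l = 1 \<and> x - l *\<^sub>R u \<in> N)"
proof -
  define c where "c = x \<odot> x"
  have cC: "c \<in> C" unfolding c_def using xC by (simp add: Cmul)
  have nc: "norm c \<le> 1" unfolding c_def using nsq[of x] nx by simp
  define g where "g z n = norm (pw c n \<odot> z)" for z n
  have npw: "norm (pw c n) \<le> 1" for n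
    using pw_norm[of c n] power_le_one[OF norm_ge_zero nc, of n] by linarith
  have gmono1: "g z (Suc n) \<le> g z n" if "z \<in> C" for z n
  proof -
    have "pw c (Suc n) \<odot> z = c \<odot> (pw c n \<odot> z)" using that cC by (simp add: pw_Suc assoc)
    then have "g z (Suc n) \<le> norm c * g z n" unfolding g_def using nmult by metis
    also have "\<dots> \<le> g z n" using nc unfolding g_def by (simp add: mult_left_le_one_le)
    finally show ?thesis .
  qed
  have gmono: "g z m \<le> g z n" if "z \<in> C" "n \<le> m" for z n m
    using lift_Suc_antimono_le[of "g z", OF gmono1[OF that(1)] that(2)] .
  define N where "N = {z \<in> C. \<forall>e>0. \<exists>n. g z n < e}"
  have NC: "N \<subseteq> C" unfolding N_def by auto
  have N0: "0 \<in> N" unfolding N_def g_def by auto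
  have Nadd: "z1 + z2 \<in> N" if "z1 \<in> N" "z2 \<in> N" for z1 z2
  proof -
    have C12: "z1 \<in> C" "z2 \<in> C" using that NC by auto
    have "\<exists>n. g (z1 + z2) n < e" if e: "e > 0" for e
    proof -
      have h: "\<forall>e>0. \<exists>n. g z1 n < e" "\<forall>e>0. \<exists>n. g z2 n < e" using \<open>z1 \<in> N\<close> \<open>z2 \<in> N\<close> unfolding N_def by auto
      have e2: "e/2 > 0" using e by simp
      obtain n1 where n1: "g z1 n1 < e/2" using h(1) e2 by blast
      obtain n2 where n2: "g z2 n2 < e/2" using h(2) e2 by blast
      note n = n1 n2
      have "g (z1 + z2) (max n1 n2) \<le> g z1 (max n1 n2) + g z2 (max n1 n2)"
        unfolding g_def by (simp add: norm_triangle_ineq)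
      also have "\<dots> \<le> g z1 n1 + g z2 n2" using gmono C12 by (intro add_mono) auto
      finally show ?thesis using n by (intro exI[of _ "max n1 n2"]) linarith
    qed
    then show ?thesis unfolding N_def using C12 by auto
  qed
  have Nscale: "r *\<^sub>R z \<in> N" if "z \<in> N" for r z
  proof -
    have zC: "z \<in> C" using that NC by auto
    have "\<exists>n. g (r *\<^sub>R z) n < e" if e: "e > 0" for e
    proof -
      have h: "\<forall>e>0. \<exists>n. g z n < e" using \<open>z \<in> N\<close> unfolding N_def by auto
      have "e / (\<bar>r\<bar> + 1) > 0" using e by (simp add: add_nonneg_pos)
      then obtain n where n: "g z n < e / (\<bar>r\<bar> + 1)" using h by blast
      have "g (r *\<^sub>R z) n = \<bar>r\<bar> * g z n" unfolding g_def by simp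
      also have "\<dots> \<le> (\<bar>r\<bar> + 1) * g z n" unfolding g_def by (simp add: mult_right_mono)
      also have "\<dots> < e" using n by (simp add: field_simps)
      finally show ?thesis by blast
    qed
    then show ?thesis unfolding N_def using zC by auto
  qed
  have Nsub: "subspace N" unfolding subspace_def using N0 Nadd Nscale by auto
  have Nideal: "z \<odot> w \<in> N" if "z \<in> N" "w \<in> C" for z w
  proof -
    have zC: "z \<in> C" using that NC by auto
    have "\<exists>n. g (z \<odot> w) n < e" if e: "e > 0" for e
    proof -
      have h: "\<forall>e>0. \<exists>n. g z n < e" using \<open>z \<in> N\<close> unfolding N_def by auto
      have "e / (norm w + 1) > 0" using e by (simp add: add_nonneg_pos)
      then obtain n where n: "g z n < e / (norm w + 1)" using h by blast
      have "pw c n \<odot> (z \<odot> w) = (pw c n \<odot> z) \<odot> w" using zC cC \<open>w \<in> C\<close> by (simp add: assoc)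
      then have "g (z \<odot> w) n \<le> g z n * norm w" unfolding g_def using nmult by metis
      also have "\<dots> \<le> g z n * (norm w + 1)" unfolding g_def by (simp add: mult_left_mono)
      also have "\<dots> < e" using n pos_less_divide_eq[of "norm w + 1" "g z n" e]
        by (simp add: add_nonneg_pos)
      finally show ?thesis by blast
    qed
    then show ?thesis unfolding N_def using zC that Cmul by auto
  qed
  have Ncl: "closed N" unfolding closed_sequential_limits
  proof (intro allI impI, elim conjE)
    fix zs z assume zs: "\<forall>k. zs k \<in> N" and lim: "zs \<longlonglongrightarrow> z"
    have "z \<in> C" using Ccl zs NC lim unfolding closed_sequential_limits by blast
    moreover have "\<exists>n. g z n < e" if e: "e > 0" for e
    proof -
      have e2: "e/2 > 0" using e by simp
      obtain M where "\<forall>k\<ge>M. norm (zs k - z) < e/2" using lim e2 unfolding LIMSEQ_iff by blast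
      then have k: "norm (zs M - z) < e/2" by simp
      have h: "\<forall>e>0. \<exists>n. g (zs M) n < e" using zs unfolding N_def by auto
      obtain n where n: "g (zs M) n < e/2" using h e2 by blast
      define k where "k = M"
      note k = k[folded k_def] and n = n[folded k_def]
      have "pw c n \<odot> z = pw c n \<odot> zs k - pw c n \<odot> (zs k - z)"
        by (simp only: jp_diffR) (simp only: diff_diff_eq2 add_diff_cancel_left')
      then have "g z n \<le> g (zs k) n + norm (pw c n \<odot> (zs k - z))" unfolding g_def
        by (metis norm_triangle_ineq4)
      also have "norm (pw c n \<odot> (zs k - z)) \<le> norm (zs k - z)"
      proof -
        have "norm (pw c n) * norm (zs k - z) \<le> 1 * norm (zs k - z)"
          using npw[of n] by (intro mult_right_mono) auto
        then show ?thesis using nmult[of "pw c n" "zs k - z"] by simp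
      qed
      finally show ?thesis using n k by (intro exI[of _ n]) linarith
    qed
    ultimately show "z \<in> N" unfolding N_def by auto
  qed
  have uN: "u \<notin> N"
  proof
    assume "u \<in> N"
    then have "\<forall>e>0. \<exists>n. g u n < e" unfolding N_def by auto
    then obtain n where "g u n < 1" using zero_less_one by blast
    moreover have "g u n = 1" unfolding g_def c_def using pw_sq[OF xC] nsq pw_norm1[OF uz xC nx] by simp
    ultimately show False by simp
  qed
  have ucN: "u - c \<in> N"
  proof -
    have "\<exists>n. g (u - c) n < e" if e: "e > 0" for e
    proof -
      obtain n where n: "2 / e < real n" using reals_Archimedean2 by blast
      have "g (u - c) n = norm (pw c n - pw c (Suc n))" unfolding g_def using pw_Suc'[OF cC] by simp
      also have "\<dots> \<le> 2 / (real n + 1)" unfolding c_def using crux[OF xC] nx by simp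
      also have "\<dots> < e" using n e by (simp add: field_simps)
      finally show ?thesis by blast
    qed
    then show ?thesis unfolding N_def using cC by auto
  qed
  define D where "D = {t *\<^sub>R u + n | t n. n \<in> N}"
  have DA: "D \<in> ASU jp u" unfolding D_def by (rule line_ASU[OF NC Nsub Ncl Nideal uN])
  have RD: "Ru \<subseteq> D" unfolding D_def using N0 by force
  have DC: "D \<subseteq> C" unfolding D_def using NC by auto
  have "D \<noteq> Ru"
  proof
    assume "D = Ru"
    moreover have "u - c \<in> D" unfolding D_def using ucN by (intro CollectI exI[of _ 0] exI[of _ "u - c"]) auto
    ultimately obtain r where r: "u - c = r *\<^sub>R u" by auto
    then have "r = 0" using rN[OF Nsub uN] ucN by metis
    then show False using r xu unfolding c_def by simp
  qed
  then have DCe: "D = C" using atom_eq[OF atom DA RD DC] by simp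
  then obtain l m where lm: "x = l *\<^sub>R u + m" "m \<in> N" using xC unfolding D_def by auto
  have mC: "m \<in> C" using lm NC by auto
  have "x \<odot> x = (l * l) *\<^sub>R u + ((2 * l) *\<^sub>R m + m \<odot> m)"
    unfolding lm by (simp only: jp_addL jp_addR jp_scaleL jp_scaleR unitL unitR)
      (simp add: algebra_simps scaleR_2, metis mult_2_right scaleR_add_left)
  moreover have "(2 * l) *\<^sub>R m + m \<odot> m \<in> N" using lm mC Nideal Nadd Nscale by auto
  ultimately have "(1 - l * l) *\<^sub>R u = (u - c) + ((2 * l) *\<^sub>R m + m \<odot> m)"
    unfolding c_def by (simp add: algebra_simps)
  also have "\<dots> \<in> N" using ucN \<open>(2 * l) *\<^sub>R m + m \<odot> m \<in> N\<close> Nadd by auto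
  finally have "1 - l * l = 0" using rN[OF Nsub uN] by metis
  then have "l * l = 1" by simp
  moreover have "x - l *\<^sub>R u \<in> N" using lm by simp
  ultimately show ?thesis using NC Nsub Ncl Nideal uN DCe unfolding D_def by blast
qed


lemma sepN:
  assumes atom: "is_atom (ASU jp u) Ru C"
    and N1: "N1 \<subseteq> C" "subspace N1" "closed N1" "\<forall>z\<in>N1. \<forall>w\<in>C. z \<odot> w \<in> N1" "u \<notin> N1"
       "C = {t *\<^sub>R u + n | t n. n \<in> N1}"
    and N2: "N2 \<subseteq> C" "subspace N2" "closed N2" "\<forall>z\<in>N2. \<forall>w\<in>C. z \<odot> w \<in> N2" "u \<notin> N2"
       "C = {t *\<^sub>R u + n | t n. n \<in> N2}"
    and m: "m \<in> N1" "m \<notin> N2"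
  shows "\<forall>z\<in>C. \<exists>s t. z = s *\<^sub>R m + t *\<^sub>R u"
proof -
  define K where "K = N1 \<inter> N2"
  have Ksub: "subspace K" unfolding K_def using N1 N2 by (simp add: subspace_inter)
  have KC: "K \<subseteq> C" unfolding K_def using N1(1) by blast
  have Kcl: "closed K" unfolding K_def using N1(3) N2(3) by (rule closed_Int)
  have Kid: "\<And>z w. z \<in> K \<Longrightarrow> w \<in> C \<Longrightarrow> z \<odot> w \<in> K" unfolding K_def using N1(4) N2(4) by blast
  have uK: "u \<notin> K" unfolding K_def using N1(5) by blast
  have KA: "{t *\<^sub>R u + n | t n. n \<in> K} \<in> ASU jp u" by (rule line_ASU[OF KC Ksub Kcl Kid uK])
  define D where "D = {t *\<^sub>R u + n | t n. n \<in> K}"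
  have RD: "Ru \<subseteq> D" unfolding D_def using Ksub subspace_0 by force
  have DC: "D \<subseteq> C" unfolding D_def K_def using N1 by auto
  have mC: "m \<in> C" using m N1 by auto
  have mD: "m \<notin> D"
  proof
    assume "m \<in> D"
    then obtain t k where tk: "m = t *\<^sub>R u + k" "k \<in> K" unfolding D_def by auto
    then have "t *\<^sub>R u = m - k" by simp
    also have "\<dots> \<in> N1" using subspace_diff[OF N1(2) m(1)] tk(2) unfolding K_def by blast
    finally have "t = 0" using rN[OF N1(2) N1(5)] by metis
    then show False using tk m unfolding K_def by simp
  qed
  have "D = Ru"
  proof (rule ccontr)
    assume "D \<noteq> Ru"
    then have "D = C" using atom_eq[OF atom KA[folded D_def] RD DC] by simp
    then show False using mD mC by simp
  qed
  then have K0: "k = 0" if "k \<in> K" for k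
  proof -
    have "k \<in> D" unfolding D_def using that by (intro CollectI exI[of _ 0] exI[of _ k]) simp
    then obtain r where "k = r *\<^sub>R u" using \<open>D = Ru\<close> by auto
    then show ?thesis using that rN[OF N1(2) N1(5)] unfolding K_def by auto
  qed
  obtain \<alpha> k2 where mk: "m = \<alpha> *\<^sub>R u + k2" "k2 \<in> N2" using mC N2(6) by auto
  have a0: "\<alpha> \<noteq> 0" using mk m by auto
  show ?thesis
  proof
    fix z assume "z \<in> C"
    then obtain \<beta> l where bl: "z = \<beta> *\<^sub>R u + l" "l \<in> N1" using N1(6) by auto
    then have "l \<in> C" using N1 by auto
    then obtain \<beta>' l2 where bl2: "l = \<beta>' *\<^sub>R u + l2" "l2 \<in> N2" using N2(6) by auto
    define w where "w = l - (\<beta>'/\<alpha>) *\<^sub>R m"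
    have "w \<in> N1" unfolding w_def using bl m N1 by (simp add: subspace_diff subspace_scale)
    moreover have "w = l2 - (\<beta>'/\<alpha>) *\<^sub>R k2" unfolding w_def bl2(1) mk(1) using a0
      by (simp add: algebra_simps)
    then have "w \<in> N2" using bl2 mk N2 by (simp add: subspace_diff subspace_scale)
    ultimately have "w = 0" using K0 unfolding K_def by auto
    then have "l = (\<beta>'/\<alpha>) *\<^sub>R m" unfolding w_def by simp
    then show "\<exists>s t. z = s *\<^sub>R m + t *\<^sub>R u" using bl by (intro exI[of _ "\<beta>'/\<alpha>"] exI[of _ \<beta>]) simp
  qed
qed

lemma forward:
  assumes atom: "is_atom (ASU jp u) Ru C"
  shows "\<exists>p. is_projection jp p \<and> p \<noteq> 0 \<and> p \<noteq> u \<and> C = span {p, u - p}"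
proof -
  have uz: "u \<noteq> 0"
  proof
    assume "u = 0"
    have "a = 0" for a :: 'a
    proof -
      have "a = u \<odot> a" by simp
      then show ?thesis using \<open>u = 0\<close> by simp
    qed
    then have "C = Ru"
    proof (intro set_eqI)
      fix y :: 'a
      assume z: "\<And>a::'a. a = 0"
      have "0 \<in> Ru" by (metis rangeI scale_zero_left)
      then show "y \<in> C \<longleftrightarrow> y \<in> Ru" using z[of y] by simp
    qed
    then show False using atom unfolding is_atom_def by simp
  qed
  have RC: "Ru \<subseteq> C" by auto
  have "C \<noteq> Ru" using atom unfolding is_atom_def by simp
  then obtain x0 where x0: "x0 \<in> C" "x0 \<notin> Ru" using RC by blast
  have x00: "x0 \<noteq> 0" using x0 by (metis rangeI scale_zero_left)
  define x where "x = (1 / norm x0) *\<^sub>R x0"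
  have xC: "x \<in> C" unfolding x_def using x0 by simp
  have nx: "norm x = 1" unfolding x_def using x00 by simp
  have xR: "x \<notin> Ru"
  proof
    assume "x \<in> Ru"
    then obtain r where "x = r *\<^sub>R u" by auto
    moreover have "x0 = norm x0 *\<^sub>R x" unfolding x_def using x00 by simp
    ultimately have "x0 = (norm x0 * r) *\<^sub>R u" by simp
    then show False using x0 by (metis rangeI)
  qed
  show ?thesis
  proof (cases "x \<odot> x = u")
    case True
    then show ?thesis using quad_case[OF atom uz xC xR, of 0 1] by simp
  next
    case False
    obtain N1 where N1: "N1 \<subseteq> C" "subspace N1" "closed N1" "\<forall>z\<in>N1. \<forall>w\<in>C. z \<odot> w \<in> N1" "u \<notin> N1"
       "C = {t *\<^sub>R u + n | t n. n \<in> N1}" and lex: "\<exists>l. l * l = 1 \<and> x - l *\<^sub>R u \<in> N1"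
      using charN[OF atom uz xC nx False] by blast
    obtain l where l: "x - l *\<^sub>R u \<in> N1" using lex by blast
    define m where "m = x - l *\<^sub>R u"
    have m0: "m \<noteq> 0" unfolding m_def using xR by (metis eq_iff_diff_eq_0 rangeI)
    define z where "z = (1 / norm m) *\<^sub>R m"
    have zN: "z \<in> N1" unfolding z_def m_def using l N1(2) by (simp add: subspace_scale)
    have zC: "z \<in> C" using zN N1(1) by auto
    have nz: "norm z = 1" unfolding z_def using m0 by simp
    have zR: "z \<notin> Ru"
    proof
      assume "z \<in> Ru"
      then obtain r where r: "z = r *\<^sub>R u" by auto
      then have "r = 0" using rN[OF N1(2) N1(5)] zN by metis
      then show False using r nz by simp
    qed
    show ?thesis
    proof (cases "z \<odot> z = u")
      case True
      then show ?thesis using quad_case[OF atom uz zC zR, of 0 1] by simp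
    next
      case False
      obtain N2 where N2: "N2 \<subseteq> C" "subspace N2" "closed N2" "\<forall>z\<in>N2. \<forall>w\<in>C. z \<odot> w \<in> N2" "u \<notin> N2"
         "C = {t *\<^sub>R u + n | t n. n \<in> N2}" and lex2: "\<exists>l. l * l = 1 \<and> z - l *\<^sub>R u \<in> N2"
        using charN[OF atom uz zC nz False] by blast
      obtain l2 where l2: "l2 * l2 = 1" "z - l2 *\<^sub>R u \<in> N2" using lex2 by blast
      have zN2: "z \<notin> N2"
      proof
        assume "z \<in> N2"
        then have "z - (z - l2 *\<^sub>R u) \<in> N2" using subspace_diff[OF N2(2) _ l2(2)] by blast
        then have "l2 *\<^sub>R u \<in> N2" by simp
        then have "l2 = 0" using rN[OF N2(2) N2(5)] by metis
        then show False using l2 by simp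
      qed
      have all: "\<forall>w\<in>C. \<exists>s t. w = s *\<^sub>R z + t *\<^sub>R u"
        by (rule sepN[OF atom N1 N2 zN zN2])
      then obtain s t where "z \<odot> z = s *\<^sub>R z + t *\<^sub>R u" using Cmul[OF zC zC] by blast
      then show ?thesis using quad_case[OF atom uz zC zR] by blast
    qed
  qed
qed


lemma backward:
  assumes proj: "is_projection jp p" and p0: "p \<noteq> 0" and pu: "p \<noteq> u" and Ceq: "C = span {p, u - p}"
  shows "is_atom (ASU jp u) Ru C"
proof -
  have uz: "u \<noteq> 0"
  proof
    assume "u = 0"
    have "p = u \<odot> p" by simp
    then show False using \<open>u = 0\<close> p0 by simp
  qed
  have pC: "p \<in> C" unfolding Ceq by (simp add: span_base)
  have pR: "p \<notin> Ru"
  proof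
    assume "p \<in> Ru"
    then obtain r where r: "p = r *\<^sub>R u" by auto
    have "p \<odot> p = p" using proj unfolding is_projection_def .
    then have "(r * r) *\<^sub>R u = r *\<^sub>R u" unfolding r by simp
    then have "r * r = r" using uz by (metis scaleR_cancel_right)
    then have "r = 0 \<or> r = 1" by (metis mult_cancel_left1 mult_zero_left mult.commute)
    then show False using r p0 pu by auto
  qed
  have CR: "C \<noteq> Ru" using pC pR by blast
  have nob: "\<not> (\<exists>y\<in>ASU jp u. Ru \<subset> y \<and> y \<subset> C)"
  proof
    assume "\<exists>y\<in>ASU jp u. Ru \<subset> y \<and> y \<subset> C"
    then obtain y where y: "y \<in> ASU jp u" "Ru \<subset> y" "y \<subset> C" by blast
    have ysub: "subspace y" and uy: "u \<in> y" using y(1) unfolding ASU_def by auto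
    obtain w where w: "w \<in> y" "w \<notin> Ru" using y(2) by blast
    have "w \<in> span {p, u - p}" using w y(3) Ceq by blast
    then obtain k where "w - k *\<^sub>R p \<in> span {u - p}" using span_breakdown_eq[of w p "{u - p}"] by auto
    then obtain j where j: "w - k *\<^sub>R p = j *\<^sub>R (u - p)" unfolding span_singleton by auto
    then have wf: "w = (k - j) *\<^sub>R p + j *\<^sub>R u" by (simp add: algebra_simps)
    have kj: "k - j \<noteq> 0"
    proof
      assume "k - j = 0"
      then have "w = j *\<^sub>R u" using wf by simp
      then show False using w by auto
    qed
    have "p = (1 / (k - j)) *\<^sub>R (w - j *\<^sub>R u)" using wf kj by simp
    then have py: "p \<in> y" using w ysub uy by (simp add: subspace_diff subspace_scale)
    have "u - p \<in> y" using py uy ysub by (simp add: subspace_diff)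
    then have "span {p, u - p} \<subseteq> y" using py ysub by (intro span_minimal) auto
    then show False using y(3) Ceq by blast
  qed
  show ?thesis unfolding is_atom_def using CA CR nob by blast
qed

end

theorem lemma2p3:
  fixes jp :: "'a::banach \<Rightarrow> 'a \<Rightarrow> 'a"
    and u :: 'a
    and T :: "'a \<Rightarrow> ('b::banach \<Rightarrow>\<^sub>L real)"
    and C :: "'a set"
  assumes "jb_algebra jp"
    and "is_unit jp u"
    and "dual_space_iso T"
    and "C \<in> ASU jp u"
  shows "is_atom (ASU jp u) (range (\<lambda>r. r *\<^sub>R u)) C \<longleftrightarrow>
         (\<exists>p. is_projection jp p \<and> p \<noteq> 0 \<and> p \<noteq> u \<and> C = span {p, u - p})"
proof -
  interpret jbC jp u C using assms by (unfold_locales) auto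
  show ?thesis using forward backward by blast
qed

end
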